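(* For all integers $n,k,j\ge 0$, \[ \sum_{i=0}^n e_{n,i}^k \binom{n+j-i}{n} = (j+k+1)^n . \]
   Context: For a fixed integer parameter $k$, the numbers $e^k_{n,i}$ are defined by $e^k_{0,0}=1$, $e^k_{n,i}=0$ whenever $i<0$ or $i>n$, and $e^k_{n,i}=(k+i+1)\,e^k_{n-1,i}+(n-k-i)\,e^k_{n-1,i-1}$ for all other integers $n,i$. Binomial coefficients $\binom{a}{n}$ with $0\le a<n$ are $0$. *)

theory Defs
  imports Main
begin

fun e :: "int \<Rightarrow> nat \<Rightarrow> int \<Rightarrow> int" where
  "e k 0 i = (if i = 0 then 1 else 0)"
| "e k (Suc n) i =
     (if i < 0 \<or> i > int (Suc n) then 0
      else (k + i + 1) * e k n i + (int (Suc n) - k - i) * e k n (i - 1))"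

end

theory Submission
  imports Defs
begin

lemma e_neg: "i < 0 \<Longrightarrow> e k n i = 0"
  by (cases n) auto

lemma e_big: "i > int n \<Longrightarrow> e k n i = 0"
  by (cases n) auto

lemma key_binom:
  fixes m n k i j :: nat
  assumes "i \<le> n"
  shows "(int k + int i + 1) * int ((Suc n + j - i) choose Suc n)
       + (int n - int k - int i) * int ((n + j - i) choose Suc n)
       = (int j + int k + 1) * int ((n + j - i) choose n)"
proof -
  define m where "m = n + j - i"
  have m: "int m = int n + int j - int i" using assms unfolding m_def by simp
  have s: "Suc n + j - i = Suc m" using assms unfolding m_def by simp
  have A: "int (Suc n) * int (Suc m choose Suc n) = int (Suc m) * int (m choose n)"
    using Suc_times_binomial[of n m] by (metis of_nat_mult)
  have P: "int (Suc m choose Suc n) = int (m choose n) + int (m choose Suc n)"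
    by simp
  have "int (Suc n) * ((int k + int i + 1) * int (Suc m choose Suc n)
       + (int n - int k - int i) * int (m choose Suc n))
       = int (Suc n) * ((int j + int k + 1) * int (m choose n))"
  proof -
    have B: "int (Suc n) * int (m choose Suc n) = (int m - int n) * int (m choose n)"
      using A P by (simp add: algebra_simps)
    have "int (Suc n) * ((int k + int i + 1) * int (Suc m choose Suc n)
       + (int n - int k - int i) * int (m choose Suc n))
       = (int k + int i + 1) * (int (Suc n) * int (Suc m choose Suc n))
       + (int n - int k - int i) * (int (Suc n) * int (m choose Suc n))"
      by (simp add: algebra_simps)
    also have "\<dots> = (int k + int i + 1) * (int (Suc m) * int (m choose n))
       + (int n - int k - int i) * ((int m - int n) * int (m choose n))"
      using A B by simp
    also have "\<dots> = int (Suc n) * ((int j + int k + 1) * int (m choose n))"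
      by (simp only: of_nat_Suc m) (simp add: algebra_simps)
    finally show ?thesis .
  qed
  then show ?thesis unfolding s m_def[symmetric]
    by (metis mult_cancel_left of_nat_eq_0_iff nat.distinct(1))
qed

theorem corollary2p4:
  fixes n k j :: nat
  shows "(\<Sum>i=0..n. e (int k) n (int i) * int ((n + j - i) choose n)) = (int j + int k + 1) ^ n"
proof (induction n)
  case 0
  then show ?case by simp
next
  case (Suc n)
  let ?c = "\<lambda>i. int ((Suc n + j - i) choose Suc n)"
  let ?E = "\<lambda>i. e (int k) n (int i)"
  have "(\<Sum>i=0..Suc n. e (int k) (Suc n) (int i) * ?c i)
      = (\<Sum>i=0..Suc n. (int k + int i + 1) * e (int k) n (int i) * ?c i)
      + (\<Sum>i=0..Suc n. (int (Suc n) - int k - int i) * e (int k) n (int i - 1) * ?c i)"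
    by (simp add: sum.distrib[symmetric] algebra_simps)
  also have "(\<Sum>i=0..Suc n. (int k + int i + 1) * e (int k) n (int i) * ?c i)
      = (\<Sum>i=0..n. (int k + int i + 1) * ?E i * ?c i)"
    by (simp add: e_big)
  also have "(\<Sum>i=0..Suc n. (int (Suc n) - int k - int i) * e (int k) n (int i - 1) * ?c i)
      = (\<Sum>i=0..n. (int n - int k - int i) * ?E i * int ((n + j - i) choose Suc n))"
    by (subst sum.atLeast0_atMost_Suc_shift) (simp add: e_neg algebra_simps)
  also have "(\<Sum>i=0..n. (int k + int i + 1) * ?E i * ?c i)
      + (\<Sum>i=0..n. (int n - int k - int i) * ?E i * int ((n + j - i) choose Suc n))
      = (\<Sum>i=0..n. ?E i * ((int j + int k + 1) * int ((n + j - i) choose n)))"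
    unfolding sum.distrib[symmetric]
  proof (rule sum.cong[OF refl])
    fix i assume "i \<in> {0..n}"
    then have "i \<le> n" by simp
    from key_binom[OF this, of k j] show
      "(int k + int i + 1) * ?E i * ?c i + (int n - int k - int i) * ?E i * int ((n + j - i) choose Suc n)
       = ?E i * ((int j + int k + 1) * int ((n + j - i) choose n))"
      by (metis (no_types, lifting) distrib_left mult.assoc mult.left_commute)
  qed
  also have "\<dots> = (int j + int k + 1) * (\<Sum>i=0..n. ?E i * int ((n + j - i) choose n))"
    by (simp add: sum_distrib_left algebra_simps)
  also have "\<dots> = (int j + int k + 1) ^ Suc n" using Suc by simp
  finally show ?case .
qed

end
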